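(* Fix non-negative integers $t,a,b,c,u,e,f,g$ such that $t\ge 14$, $$10a+6b+3c+u+6e+3f+g\le\binom{t+2}{2},$$ and $(e,f,g)$ is one of the triples $(0,0,0),(0,0,1),(0,0,2),(0,1,0),(0,1,1),(0,1,2),(1,0,0),(1,0,1),(1,0,2),(1,1,0)$. Then $$6a+3b+c+10e+10f+10g\le\binom{t+1}{2}.$$ Moreover, if in addition $e+f+g\le 2$, the same conclusion holds for every $t\ge 12$; and if $e=f=g=0$, the conclusion holds for every $t\ge 3$. *)

theory Defs
  imports Main
begin

end

theory Submission
  imports Defs
begin

theorem lemma2p6:
  fixes t a b c u e f g :: nat
  assumes hyp: "10*a + 6*b + 3*c + u + 6*e + 3*f + g \<le> (t + 2) choose 2"
    and trip: "(e, f, g) \<in> {(0,0,0),(0,0,1),(0,0,2),(0,1,0),(0,1,1),(0,1,2),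
                             (1,0,0),(1,0,1),(1,0,2),(1,1,0)}"
  shows "(t \<ge> 14 \<longrightarrow> 6*a + 3*b + c + 10*e + 10*f + 10*g \<le> (t + 1) choose 2)
       \<and> (t \<ge> 12 \<and> e + f + g \<le> 2 \<longrightarrow> 6*a + 3*b + c + 10*e + 10*f + 10*g \<le> (t + 1) choose 2)
       \<and> (t \<ge> 3 \<and> e = 0 \<and> f = 0 \<and> g = 0 \<longrightarrow> 6*a + 3*b + c + 10*e + 10*f + 10*g \<le> (t + 1) choose 2)"
proof -
  have N: "2 * ((t + 2) choose 2) = t*t + 3*t + 2"
    by (simp add: choose_two algebra_simps)
  have M: "2 * ((t + 1) choose 2) = t*t + t"
    by (simp add: choose_two algebra_simps)
  have t14: "t \<ge> 14 \<Longrightarrow> t*t \<ge> 14*t" by simp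
  have t12: "t \<ge> 12 \<Longrightarrow> t*t \<ge> 12*t" by simp
  have t3: "t \<ge> 3 \<Longrightarrow> t*t \<ge> 3*t" by simp
  define NN where "NN = (t + 2) choose 2"
  define MM where "MM = (t + 1) choose 2"
  define T where "T = t*t"
  have h: "10*a + 6*b + 3*c + u + 6*e + 3*f + g \<le> NN" using hyp NN_def by simp
  have N': "2*NN = T + 3*t + 2" using N NN_def T_def by simp
  have M': "2*MM = T + t" using M MM_def T_def by simp
  have "(t \<ge> 14 \<longrightarrow> 6*a + 3*b + c + 10*e + 10*f + 10*g \<le> MM)
       \<and> (t \<ge> 12 \<and> e + f + g \<le> 2 \<longrightarrow> 6*a + 3*b + c + 10*e + 10*f + 10*g \<le> MM)
       \<and> (t \<ge> 3 \<and> e = 0 \<and> f = 0 \<and> g = 0 \<longrightarrow> 6*a + 3*b + c + 10*e + 10*f + 10*g \<le> MM)"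
    using trip h N' M' t14[folded T_def] t12[folded T_def] t3[folded T_def]
    by (elim insertE emptyE; simp; linarith)
  then show ?thesis unfolding MM_def .
qed

end
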